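(* Let $\gamma>0$, $s\in(0,q^{-1/2})$, $h\in\mathcal M_s$, and let $g\in\mathcal I^\infty_\gamma$ be such that the series $\mu_\gamma(g)(t)$ converges absolutely for all $|t|\le(1-q)^{-1}q^{-1/2}s^{-1}$. Then $g*_\gamma h$ is a well-defined function and belongs to $\mathcal M_s$.
   Context: Fix $q\in(0,1)$. Notation: $(a;q)_k=\prod_{j=0}^{k-1}(1-aq^j)$, $(a;q)_\infty=\lim_k(a;q)_k$, $[k]_q!=(q;q)_k/(1-q)^k$, $e_q(x)=1/(x;q)_\infty$. The $q$-derivative is $(\partial f)(x)=\frac{f(x)-f(qx)}{(1-q)x}$ (extended to $x=0$ by continuity for $f$ holomorphic near $0$). For $\gamma>0$, $L(\gamma)=\{\pm q^k\gamma:k\in\mathbb Z\}$ and $\int_\gamma f=(1-q)\sum_{k\in\mathbb Z}\sum_{\epsilon=\pm1}q^k\gamma f(\epsilon q^k\gamma)$ whenever absolutely convergent. $\mathcal I^\infty_\gamma$ is the set of functions $f$ on $L(\gamma)$ with $\int_\gamma|f(x)x^e|<\infty$ for all integers $e\ge0$. Moments: $\mu_{e,\gamma}(f)=q^{(e^2+e)/2}\int_\gamma f(x)x^e$. The $q$-moment series is $\mu_\gamma(f)(t)=\sum_{k\ge0}\mu_{k,\gamma}(f)t^k/[k]_q!$. The $q$-convolution of $f\in\mathcal I^\infty_\gamma$ with $g$ is $(f*_\gamma g)(x)=\sum_{e\ge0}\frac{(-1)^e\mu_{e,\gamma}(f)}{[e]_q!}(\partial^eg)(x)$ at all $x$ where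 the $q$-derivatives are defined and the series converges absolutely. For $s>0$, $\mathcal M_s$ is the set of functions $F(x)=f(x)e_{q^2}(-x^2)$ (holomorphic on $|\mathrm{Im}\,x|<1$) where $f(x)=\sum_{l\ge0}a_lx^l$ with $|a_l|\le Cs^lq^{l^2/2}$ for all $l$, for some $C>0$. *)

theory Defs
  imports "HOL-Analysis.Analysis"
begin

definition qpoch_inf :: "real \<Rightarrow> complex \<Rightarrow> complex" where
  "qpoch_inf q a = prodinf (\<lambda>j. 1 - a * of_real (q ^ j))"

definition qexp :: "real \<Rightarrow> complex \<Rightarrow> complex" where
  "qexp q x = 1 / qpoch_inf q x"

definition qfact :: "real \<Rightarrow> nat \<Rightarrow> real" where
  "qfact q k = (\<Prod>j<k. 1 - q ^ (j + 1)) / (1 - q) ^ k"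

definition qD :: "real \<Rightarrow> (complex \<Rightarrow> complex) \<Rightarrow> complex \<Rightarrow> complex" where
  "qD q f x = (if x = 0
      then Lim (at (0::complex)) (\<lambda>y. (f y - f (of_real q * y)) / (of_real (1 - q) * y))
      else (f x - f (of_real q * x)) / (of_real (1 - q) * x))"

text \<open>Index set for the lattice L(gamma): pairs (k, epsilon).\<close>
definition Lidx :: "(int \<times> real) set" where
  "Lidx = UNIV \<times> {-1, 1}"

definition jint_abs_conv :: "real \<Rightarrow> real \<Rightarrow> (real \<Rightarrow> complex) \<Rightarrow> bool" where
  "jint_abs_conv q \<gamma> f =
     ((\<lambda>(k, \<epsilon>). norm (of_real (q powi k * \<gamma>) * f (\<epsilon> * q powi k * \<gamma>))) summable_on Lidx)"

definition jint :: "real \<Rightarrow> real \<Rightarrow> (real \<Rightarrow> complex) \<Rightarrow> complex" where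
  "jint q \<gamma> f = of_real (1 - q) *
     infsum (\<lambda>(k, \<epsilon>). of_real (q powi k * \<gamma>) * f (\<epsilon> * q powi k * \<gamma>)) Lidx"

definition Iinf :: "real \<Rightarrow> real \<Rightarrow> (real \<Rightarrow> complex) set" where
  "Iinf q \<gamma> = {f. \<forall>e::nat. jint_abs_conv q \<gamma> (\<lambda>x. f x * of_real (x ^ e))}"

definition qmoment :: "real \<Rightarrow> real \<Rightarrow> (real \<Rightarrow> complex) \<Rightarrow> nat \<Rightarrow> complex" where
  "qmoment q \<gamma> f e = of_real (q ^ ((e\<^sup>2 + e) div 2)) * jint q \<gamma> (\<lambda>x. f x * of_real (x ^ e))"

definition qconv_term ::
  "real \<Rightarrow> real \<Rightarrow> (real \<Rightarrow> complex) \<Rightarrow> (complex \<Rightarrow> complex) \<Rightarrow> complex \<Rightarrow> nat \<Rightarrow> complex" where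
  "qconv_term q \<gamma> f g x e =
     (-1) ^ e * qmoment q \<gamma> f e / of_real (qfact q e) * ((qD q ^^ e) g) x"

definition qconv ::
  "real \<Rightarrow> real \<Rightarrow> (real \<Rightarrow> complex) \<Rightarrow> (complex \<Rightarrow> complex) \<Rightarrow> complex \<Rightarrow> complex" where
  "qconv q \<gamma> f g x = (\<Sum>e. qconv_term q \<gamma> f g x e)"

definition Ms :: "real \<Rightarrow> real \<Rightarrow> (complex \<Rightarrow> complex) set" where
  "Ms q s = {F. \<exists>a :: nat \<Rightarrow> complex. \<exists>C > 0.
      (\<forall>l. norm (a l) \<le> C * s ^ l * q powr (real l ^ 2 / 2)) \<and>
      (\<forall>x. \<bar>Im x\<bar> < 1 \<longrightarrow> F x = (\<Sum>l. a l * x ^ l) * qexp (q\<^sup>2) (- (x\<^sup>2)))}"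

end

theory Submission
  imports Defs
begin


definition stp :: "real \<Rightarrow> (nat \<Rightarrow> complex) \<Rightarrow> nat \<Rightarrow> complex" where
  "stp q c m = complex_of_real ((1 - q ^ Suc m) / (1 - q)) * c (Suc m)
     - (if m = 0 then 0 else complex_of_real (q ^ (m - 1) / (1 - q)) * c (m - 1))"

definition wt :: "real \<Rightarrow> nat \<Rightarrow> real" where
  "wt q m = (\<Prod>k\<in>{1..m}. 1 / (1 - q ^ k))"

lemma wt_0 [simp]: "wt q 0 = 1" by (simp add: wt_def)

lemma wt_Suc: "wt q (Suc m) = wt q m / (1 - q ^ Suc m)"
  by (simp add: wt_def prod.nat_ivl_Suc' mult.commute)

lemma wt_ge1: assumes "0 < q" "q < 1" shows "1 \<le> wt q m"
proof (induction m)
  case (Suc m)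
  have "q ^ Suc m < 1" using assms by (intro power_Suc_less_one) auto
  then have "0 < 1 - q ^ Suc m" "1 - q ^ Suc m \<le> 1" using assms by auto
  then have "wt q m \<le> wt q m / (1 - q ^ Suc m)" using Suc by (simp add: le_divide_eq)
  then show ?case using Suc by (simp add: wt_Suc)
qed simp

lemma wt_le: assumes "0 < q" "q < 1" shows "wt q m \<le> exp (1 / (1 - q)^2)"
proof -
  have "wt q m \<le> (\<Prod>k\<in>{1..m}. exp (q ^ k / (1 - q)))"
    unfolding wt_def
  proof (rule prod_mono, safe)
    fix k assume k: "k \<in> {1..m}"
    have qk: "0 < q ^ k" "q ^ k \<le> q" using assms k power_decreasing[of 1 k q] by auto
    have qk1: "q ^ k < 1" using assms k by (simp add: power_less_one_iff)
    then show "0 \<le> 1 / (1 - q ^ k)" by simp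
    have "1 / (1 - q ^ k) = 1 + q ^ k / (1 - q ^ k)" using qk1 by (simp add: field_simps)
    also have "\<dots> \<le> exp (q ^ k / (1 - q ^ k))" by (rule exp_ge_add_one_self)
    also have "q ^ k / (1 - q ^ k) \<le> q ^ k / (1 - q)"
      using qk qk1 assms by (intro divide_left_mono) auto
    hence "exp (q ^ k / (1 - q ^ k)) \<le> exp (q ^ k / (1 - q))" by simp
    finally show "1 / (1 - q ^ k) \<le> exp (q ^ k / (1 - q))" .
  qed
  also have "\<dots> = exp (\<Sum>k\<in>{1..m}. q ^ k / (1 - q))" by (simp add: exp_sum)
  also have "(\<Sum>k\<in>{1..m}. q ^ k / (1 - q)) \<le> 1 / (1 - q)^2"
  proof -
    have "(\<Sum>k\<in>{1..m}. q ^ k) \<le> (\<Sum>k<Suc m. q ^ k)"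
      by (rule sum_mono2) (use assms in auto)
    also have "\<dots> = (1 - q ^ Suc m) / (1 - q)" using assms by (simp add: geometric_sum field_simps)
    also have "\<dots> \<le> 1 / (1 - q)" using assms by (intro divide_right_mono) auto
    finally have "(\<Sum>k\<in>{1..m}. q ^ k) / (1 - q) \<le> 1 / (1 - q) / (1 - q)"
      using assms by (intro divide_right_mono) auto
    then show ?thesis by (simp add: sum_divide_distrib power2_eq_square)
  qed
  finally show ?thesis by simp
qed

lemma summable_gauss:
  fixes B p :: real
  assumes "0 \<le> B" "0 \<le> p" "p < 1"
  shows "summable (\<lambda>m. B ^ m * p ^ (m^2))"
proof -
  have "(\<lambda>n. B * p ^ n) \<longlonglongrightarrow> B * 0"
    by (intro tendsto_mult tendsto_const LIMSEQ_power_zero) (use assms in auto)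
  then have "eventually (\<lambda>n. B * p ^ n < 1/2) sequentially"
    by (intro order_tendstoD(2)) auto
  then obtain N where N: "\<And>n. n \<ge> N \<Longrightarrow> B * p ^ n < 1/2" by (auto simp: eventually_sequentially)
  show ?thesis
  proof (rule summable_ratio_test[where c="1/2" and N=N])
    fix n assume n: "N \<le> n"
    have e: "(Suc n)^2 = n^2 + (n + Suc n)" by (simp add: power2_eq_square)
    have "p ^ (n + Suc n) \<le> p ^ n" using assms by (intro power_decreasing) auto
    then have "B * p ^ (n + Suc n) \<le> 1/2" using N[OF n] assms
      by (smt (verit) mult_left_mono)
    then have "B ^ n * p ^ (n^2) * (B * p ^ (n + Suc n)) \<le> B ^ n * p ^ (n^2) * (1/2)"
      using assms by (intro mult_left_mono) auto
    then show "norm (B ^ Suc n * p ^ ((Suc n)^2)) \<le> 1/2 * norm (B ^ n * p ^ (n^2))"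
      using assms unfolding e by (simp add: power_add abs_mult mult_ac)
  qed simp
qed

lemma alg1:
  fixes a b d Y S T w :: real
  assumes "b \<noteq> 0" "d \<noteq> 0" "a \<noteq> 0"
  shows "(d / a) * (Y * S * T * (w / (b * d))) = Y * w * S * T / (a * b)"
  using assms by (simp add: field_simps)

lemma alg2:
  fixes X z P S :: real
  assumes "0 \<le> X" "0 \<le> z" "P < 1" "z * P < 1" "S * P \<le> 1" "0 < P"
  shows "X*S*z*z*P*P/((1-P)*(1-z*P)) + X*z/(1-P) \<le> X*z/((1-P)*(1-z*P))"
proof -
  have d: "0 < (1 - P) * (1 - z * P)" using assms by auto
  have "X * S * z * z * P * P = (X * z * z * P) * (S * P)" by simp
  also have "\<dots> \<le> (X * z * z * P) * 1" using assms by (intro mult_left_mono) auto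
  finally have "X*S*z*z*P*P + X*z*(1-z*P) \<le> X*z" by (simp add: algebra_simps)
  then have "(X*S*z*z*P*P + X*z*(1-z*P)) / ((1-P)*(1-z*P)) \<le> X*z / ((1-P)*(1-z*P))"
    using d by (intro divide_right_mono) auto
  moreover have "(X*S*z*z*P*P + X*z*(1-z*P)) / ((1-P)*(1-z*P)) = X*S*z*z*P*P/((1-P)*(1-z*P)) + X*z/(1-P)"
    using d assms by (simp add: add_divide_distrib)
  ultimately show ?thesis by simp
qed


lemma cf_bound:
  fixes p s C R :: real and a :: "nat \<Rightarrow> complex"
  assumes p: "0 < p" "p < 1" and s: "0 < s" "s * p \<le> 1" and C: "0 \<le> C"
    and a: "\<And>l. norm (a l) \<le> C * s^l * p^(l^2)"
    and R: "R = 1 / ((1 - p^2) * p * s)"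
  shows "norm ((stp (p^2) ^^ e) a m) \<le> C * R^e * s^m * p^(m^2) * wt (p^2) m"
proof (induction e arbitrary: m)
  case 0
  have "C * s^m * p^(m^2) * 1 \<le> C * s^m * p^(m^2) * wt (p^2) m"
    using p s C by (intro mult_left_mono wt_ge1) (auto simp: power_less_one_iff)
  then show ?case using a[of m] by simp
next
  case (Suc e)
  define c where "c = (stp (p^2) ^^ e) a"
  have IH: "\<And>m. norm (c m) \<le> C * R^e * s^m * p^(m^2) * wt (p^2) m" using Suc c_def by simp
  have q1: "p^2 < 1" "0 < p^2" using p by (auto simp: power_less_one_iff)
  have R0: "0 < R" using R p s q1 by auto
  have Rsp: "R * s * p = 1 / (1 - p^2)" unfolding R using p s q1 by (simp add: field_simps)
  have "norm (stp (p^2) c m) \<le> C * R^Suc e * s^m * p^(m^2) * wt (p^2) m"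
  proof (cases m)
    case 0
    have "stp (p^2) c m = c 1" using 0 q1 by (simp add: stp_def)
    then have "norm (stp (p^2) c m) \<le> C * R^e * s * p * (1 / (1 - p^2))"
      using IH[of 1] by (simp add: wt_Suc)
    also have "\<dots> = C * R^e * R * (s * p)^2"
    proof -
      have h: "s * p / (1 - p^2) = (R * s * p) * (s * p)" using Rsp by simp
      have "C * R^e * s * p * (1/(1-p^2)) = C * R^e * (s * p / (1 - p^2))" by simp
      also have "\<dots> = C * R^e * ((R * s * p) * (s * p))" by (subst h) simp
      finally show ?thesis by (simp add: power2_eq_square mult_ac)
    qed
    also have "\<dots> \<le> C * R^e * R * 1"
      using s p C R0 by (intro mult_left_mono) (auto simp: power_le_one)
    finally show ?thesis using 0 by (simp add: mult_ac)
  next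
    case (Suc k)
    define X where "X = C * R^e * s^k * p^(k^2) * wt (p^2) k"
    define z where "z = p^(2*k)"
    have X0: "0 \<le> X" unfolding X_def using C R0 s p wt_ge1[of "p^2" k] q1 by auto
    have z0: "0 \<le> z" "z \<le> 1" using p unfolding z_def by (auto simp: power_le_one)
    have zq: "(p^2)^k = z" "(p^2)^(Suc k) = z * p^2" "(p^2)^(Suc (Suc k)) = z * p^2 * p^2"
      unfolding z_def by (simp_all add: power_mult[symmetric] mult.commute)
    have "z * p^2 \<le> 1 * p^2" using z0 q1 by (intro mult_right_mono) auto
    then have zp1: "z * p^2 < 1" using q1 by linarith
    have e1: "(Suc (Suc k))^2 = k^2 + (4*k + 4)" "(Suc k)^2 = k^2 + (2*k+1)"
      by (simp_all add: power2_eq_square)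
    have "4*k+4 = 2*k + 2*k + 2 + 2" by simp
    then have p4a: "p^(4*k+4) = z * z * p^2 * p^2" unfolding z_def by (simp only: power_add)
    have p4b: "p^(2*k+1) = z * p" unfolding z_def by simp
    note p4 = p4a p4b
    have "stp (p^2) c m = complex_of_real ((1 - (p^2) ^ Suc (Suc k)) / (1 - p^2)) * c (Suc (Suc k))
          - complex_of_real ((p^2) ^ k / (1 - p^2)) * c k"
      using Suc by (simp add: stp_def)
    then have "norm (stp (p^2) c m) \<le> norm (complex_of_real ((1 - (p^2) ^ Suc (Suc k)) / (1 - p^2)) * c (Suc (Suc k)))
          + norm (complex_of_real ((p^2) ^ k / (1 - p^2)) * c k)"
      by (simp add: norm_triangle_ineq4)
    also have "\<dots> \<le> ((1 - z * p^2 * p^2) / (1 - p^2)) * (C * R^e * s^(Suc (Suc k)) * p^((Suc (Suc k))^2) * wt (p^2) (Suc (Suc k)))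
         + (z / (1 - p^2)) * (C * R^e * s^k * p^(k^2) * wt (p^2) k)"
    proof (intro add_mono)
      have "z*p^2*p^2 \<le> 1" using mult_le_one[of "z*p^2" "p^2"] zp1 q1 z0 by auto
      then have A0: "0 \<le> (1 - z * p^2 * p^2) / (1 - p^2)" using q1 by auto
      have "norm (complex_of_real ((1 - (p^2) ^ Suc (Suc k)) / (1 - p^2)) * c (Suc (Suc k)))
          = ((1 - z * p^2 * p^2) / (1 - p^2)) * norm (c (Suc (Suc k)))"
        unfolding zq(3) norm_mult norm_of_real by (simp only: abs_of_nonneg[OF A0])
      also have "\<dots> \<le> ((1 - z * p^2 * p^2) / (1 - p^2)) * (C * R^e * s^(Suc (Suc k)) * p^((Suc (Suc k))^2) * wt (p^2) (Suc (Suc k)))"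
        by (rule mult_left_mono[OF IH A0])
      finally show "norm (complex_of_real ((1 - (p^2) ^ Suc (Suc k)) / (1 - p^2)) * c (Suc (Suc k)))
         \<le> ((1 - z * p^2 * p^2) / (1 - p^2)) * (C * R^e * s^(Suc (Suc k)) * p^((Suc (Suc k))^2) * wt (p^2) (Suc (Suc k)))" .
      have B0: "0 \<le> z / (1 - p^2)" using z0 q1 by auto
      have "norm (complex_of_real ((p^2) ^ k / (1 - p^2)) * c k) = (z / (1 - p^2)) * norm (c k)"
        unfolding zq(1) norm_mult norm_of_real by (simp only: abs_of_nonneg[OF B0])
      also have "\<dots> \<le> (z / (1 - p^2)) * (C * R^e * s^k * p^(k^2) * wt (p^2) k)"
        by (rule mult_left_mono[OF IH B0])
      finally show "norm (complex_of_real ((p^2) ^ k / (1 - p^2)) * c k) \<le> (z / (1 - p^2)) * (C * R^e * s^k * p^(k^2) * wt (p^2) k)" .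
    qed
    also have "\<dots> = X * s^2 * z * z * p^2 * p^2 / ((1 - p^2) * (1 - z * p^2)) + X * z / (1 - p^2)"
    proof -
      have sk: "s^(Suc (Suc k)) = s^k * s^2" by (simp add: power2_eq_square)
      have pk: "p^((Suc (Suc k))^2) = p^(k^2) * (z*z*p^2*p^2)" unfolding e1 power_add[of p "k^2" "4*k+4"] p4a ..
      have wk: "wt (p^2) (Suc (Suc k)) = wt (p^2) k / ((1 - z*p^2) * (1 - z*p^2*p^2))"
        unfolding wt_Suc zq by (simp add: mult_ac)
      have "z*p^2*p^2 \<le> z*p^2" using z0 q1 by (intro mult_right_le_one_le) auto
      then have n1: "1 - z*p^2*p^2 \<noteq> 0" "1 - z*p^2 \<noteq> 0" "1 - p^2 \<noteq> 0" using zp1 q1 by auto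
      have "((1 - z * p^2 * p^2) / (1 - p^2)) * (C * R^e * s^(Suc (Suc k)) * p^((Suc (Suc k))^2) * wt (p^2) (Suc (Suc k)))
         = ((1 - z * p^2 * p^2) / (1 - p^2)) * ((C * R^e * s^k * p^(k^2)) * s^2 * (z*z*p^2*p^2) * (wt (p^2) k / ((1 - z*p^2) * (1 - z*p^2*p^2))))"
        unfolding sk pk wk by (simp only: mult_ac)
      also have "\<dots> = X * s^2 * (z*z*p^2*p^2) / ((1 - p^2) * (1 - z * p^2))"
        unfolding X_def using alg1[OF n1(2) n1(1) n1(3)] by simp
      finally show ?thesis by (simp add: X_def mult_ac)
    qed
    also have "\<dots> \<le> X * z / ((1 - p^2) * (1 - z * p^2))"
    proof -
      have sp: "s^2 * p^2 \<le> 1" using s p by (metis power_mult_distrib one_power2 power_mono mult_nonneg_nonneg less_imp_le)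
      show ?thesis using alg2[of X z "p^2" "s^2"] X0 z0 q1 zp1 sp by simp
    qed
    also have "\<dots> = C * R^Suc e * s^m * p^(m^2) * wt (p^2) m"
    proof -
      have n1: "1 - z*p^2 \<noteq> 0" "1 - p^2 \<noteq> 0" using zp1 q1 by auto
      have "C * R^Suc e * s^m * p^(m^2) * wt (p^2) m = X * (R * s * p) * z / (1 - z*p^2)"
        unfolding Suc X_def e1 power_add[of p "k^2" "2*k+1"] p4b wt_Suc zq(2) by (simp add: mult_ac)
      also have "\<dots> = X * z / ((1 - p^2) * (1 - z * p^2))" unfolding Rsp by simp
      finally show ?thesis by simp
    qed
    finally show ?thesis .
  qed
  then show ?case by (simp add: c_def)
qed



definition PS :: "(nat \<Rightarrow> complex) \<Rightarrow> complex \<Rightarrow> complex" where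
  "PS c x = (\<Sum>m. c m * x ^ m)"

lemma ps_summable:
  fixes c :: "nat \<Rightarrow> complex"
  assumes b: "\<And>m. norm (c m) \<le> K * s^m * p^(m^2)" and s: "0 \<le> s" and p: "0 \<le> p" "p < 1"
  shows "summable (\<lambda>m. norm (c m * y ^ m))"
proof -
  have g: "summable (\<lambda>m. K * ((s * norm y) ^ m * p^(m^2)))"
    using s p by (intro summable_mult summable_gauss) auto
  have le: "norm (norm (c m * y ^ m)) \<le> K * ((s * norm y) ^ m * p^(m^2))" for m
  proof -
    have "norm (norm (c m * y ^ m)) = norm (c m) * norm y ^ m" by (simp add: norm_mult norm_power)
    also have "\<dots> \<le> (K * s^m * p^(m^2)) * norm y ^ m" by (intro mult_right_mono b) auto
    also have "\<dots> = K * ((s * norm y) ^ m * p^(m^2))" by (simp add: power_mult_distrib mult_ac)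
    finally show ?thesis .
  qed
  show ?thesis by (rule summable_comparison_test'[OF g le])
qed

lemma ps_sums: "summable (\<lambda>m. norm (c m * y ^ m)) \<Longrightarrow> (\<lambda>m. c m * y ^ m) sums PS c y"
  unfolding PS_def by (rule summable_sums, rule summable_norm_cancel)

lemma stp_ps:
  fixes c :: "nat \<Rightarrow> complex" and q :: real and x :: complex
  assumes q: "0 < q" "q < 1" and x: "x \<noteq> 0" and sm: "\<And>y. summable (\<lambda>m. norm (c m * y ^ m))"
  shows "(PS c x - (1 + x^2) * PS c (of_real q * x)) / (of_real (1 - q) * x) = PS (stp q c) x"
proof -
  define Q where "Q = (complex_of_real q)"
  have Q1: "1 - Q \<noteq> 0" using q unfolding Q_def by (metis of_real_1 of_real_eq_iff less_irrefl right_minus_eq)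
  have S1: "(\<lambda>m. c m * x ^ m) sums PS c x" by (rule ps_sums[OF sm])
  have S2: "(\<lambda>m. c m * (Q * x) ^ m) sums PS c (Q * x)" by (rule ps_sums[OF sm])
  have D: "(\<lambda>m. c m * x ^ m - c m * (Q * x) ^ m) sums (PS c x - PS c (Q * x))"
    by (rule sums_diff[OF S1 S2])
  have D': "(\<lambda>m. c (Suc m) * x ^ Suc m - c (Suc m) * (Q * x) ^ Suc m) sums (PS c x - PS c (Q * x))"
    using D by (subst sums_Suc_iff) simp
  have A: "(\<lambda>m. complex_of_real ((1 - q ^ Suc m) / (1 - q)) * c (Suc m) * x ^ m)
       sums ((PS c x - PS c (Q * x)) / ((1 - Q) * x))"
  proof -
    have "(\<lambda>m. (c (Suc m) * x ^ Suc m - c (Suc m) * (Q * x) ^ Suc m) / ((1 - Q) * x))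
       sums ((PS c x - PS c (Q * x)) / ((1 - Q) * x))" by (rule sums_divide[OF D'])
    moreover have "(c (Suc m) * x ^ Suc m - c (Suc m) * (Q * x) ^ Suc m) / ((1 - Q) * x)
        = complex_of_real ((1 - q ^ Suc m) / (1 - q)) * c (Suc m) * x ^ m" for m
      using Q1 x unfolding Q_def by (simp add: field_simps power_mult_distrib)
    ultimately show ?thesis by simp
  qed
  define g where "g m = (if m = 0 then 0 else complex_of_real (q ^ (m - 1) / (1 - q)) * c (m - 1) * x ^ m)" for m
  have G: "g sums (x / (1 - Q) * PS c (Q * x))"
  proof (rule sums_Suc_imp)
    show "g 0 = 0" by (simp add: g_def)
    have "(\<lambda>m. x / (1 - Q) * (c m * (Q * x) ^ m)) sums (x / (1 - Q) * PS c (Q * x))"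
      by (rule sums_mult[OF S2])
    moreover have "x / (1 - Q) * (c m * (Q * x) ^ m) = g (Suc m)" for m
      using Q1 unfolding g_def Q_def by (simp add: field_simps power_mult_distrib)
    ultimately show "(\<lambda>m. g (Suc m)) sums (x / (1 - Q) * PS c (Q * x))" by simp
  qed
  have "(\<lambda>m. stp q c m * x ^ m) sums ((PS c x - PS c (Q * x)) / ((1 - Q) * x) - x / (1 - Q) * PS c (Q * x))"
  proof -
    have "(\<lambda>m. complex_of_real ((1 - q ^ Suc m) / (1 - q)) * c (Suc m) * x ^ m - g m) sums
       ((PS c x - PS c (Q * x)) / ((1 - Q) * x) - x / (1 - Q) * PS c (Q * x))"
      by (rule sums_diff[OF A G])
    moreover have "complex_of_real ((1 - q ^ Suc m) / (1 - q)) * c (Suc m) * x ^ m - g m = stp q c m * x ^ m" for m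
      unfolding g_def stp_def by (simp add: algebra_simps)
    ultimately show ?thesis by simp
  qed
  then have "PS (stp q c) x = (PS c x - PS c (Q * x)) / ((1 - Q) * x) - x / (1 - Q) * PS c (Q * x)"
    unfolding PS_def by (simp add: sums_iff)
  also have "\<dots> = (PS c x - (1 + x^2) * PS c (Q * x)) / ((1 - Q) * x)"
  proof -
    have h: "x / (1 - Q) * PS c (Q * x) = (x^2 * PS c (Q * x)) / ((1 - Q) * x)"
      using Q1 x by (simp add: power2_eq_square)
    show ?thesis unfolding h by (simp add: diff_divide_distrib[symmetric] algebra_simps)
  qed
  finally show ?thesis unfolding Q_def by simp
qed



definition Ef :: "real \<Rightarrow> complex \<Rightarrow> complex" where
  "Ef q x = qexp (q^2) (-(x^2))"

lemma qp_conv: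
  fixes Q :: real and a :: complex
  assumes "0 \<le> Q" "Q < 1"
  shows "convergent_prod (\<lambda>j. 1 - a * of_real (Q ^ j))"
proof (rule abs_convergent_prod_imp_convergent_prod, rule summable_imp_abs_convergent_prod)
  have "summable (\<lambda>j. norm a * Q ^ j)"
    using assms by (intro summable_mult summable_geometric) auto
  then show "summable (\<lambda>j. norm (1 - a * of_real (Q ^ j) - 1))"
    using assms by (simp add: norm_mult norm_power abs_of_nonneg)
qed

lemma Ef_shift:
  fixes q :: real and x :: complex
  assumes q: "0 < q" "q < 1" and x: "1 + x^2 \<noteq> 0"
  shows "Ef q (of_real q * x) = (1 + x^2) * Ef q x"
proof -
  define f where "f j = 1 - (-(x^2)) * complex_of_real ((q^2) ^ j)" for j
  have cp: "convergent_prod f" unfolding f_def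
    by (rule qp_conv) (use q in \<open>auto simp: power_less_one_iff\<close>)
  have f0: "f 0 = 1 + x^2" by (simp add: f_def)
  have fs: "(\<lambda>n. f (Suc n)) = (\<lambda>j. 1 - (-((of_real q * x)^2)) * complex_of_real ((q^2) ^ j))"
    unfolding f_def by (simp add: power_mult_distrib mult_ac)
  have "qpoch_inf (q^2) (-((of_real q * x)^2)) = prodinf f / (1 + x^2)"
    using prodinf_split_head[OF cp] f0 x unfolding qpoch_inf_def fs by simp
  moreover have "qpoch_inf (q^2) (-(x^2)) = prodinf f" unfolding qpoch_inf_def f_def by simp
  ultimately show ?thesis unfolding Ef_def qexp_def by simp
qed

lemma qp_bound:
  fixes Q :: real and a :: complex
  assumes Q: "0 \<le> Q" "Q < 1"
  shows "norm (qpoch_inf Q a - 1) \<le> exp (norm a / (1 - Q)) - 1"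
proof -
  define f where "f j = 1 - a * complex_of_real (Q ^ j)" for j
  have cp: "convergent_prod f" unfolding f_def by (rule qp_conv[OF Q])
  have L: "(\<lambda>n. norm ((\<Prod>i\<le>n. f i) - 1)) \<longlonglongrightarrow> norm (prodinf f - 1)"
    by (intro tendsto_norm tendsto_diff convergent_prod_LIMSEQ[OF cp] tendsto_const)
  have B: "norm ((\<Prod>i\<le>n. f i) - 1) \<le> exp (norm a / (1 - Q)) - 1" for n
  proof -
    have "norm ((\<Prod>i\<le>n. f i) - 1) = norm ((\<Prod>i\<le>n. 1 + (- a * complex_of_real (Q ^ i))) - 1)"
      unfolding f_def by simp
    also have "\<dots> \<le> (\<Prod>i\<le>n. 1 + norm (- a * complex_of_real (Q ^ i))) - 1"
      by (rule norm_prod_minus1_le_prod_minus1)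
    also have "(\<Prod>i\<le>n. 1 + norm (- a * complex_of_real (Q ^ i))) \<le> (\<Prod>i\<le>n. exp (norm a * Q ^ i))"
    proof (rule prod_mono)
      fix i assume "i \<in> {..n}"
      have "norm (- a * complex_of_real (Q ^ i)) = norm a * Q ^ i"
        using Q by (simp add: norm_mult norm_power abs_of_nonneg)
      then show "0 \<le> 1 + norm (- a * complex_of_real (Q ^ i)) \<and>
            1 + norm (- a * complex_of_real (Q ^ i)) \<le> exp (norm a * Q ^ i)"
        by (metis add.commute exp_ge_add_one_self norm_ge_zero add_nonneg_nonneg zero_le_one)
    qed
    also have "(\<Prod>i\<le>n. exp (norm a * Q ^ i)) = exp (norm a * (\<Sum>i\<le>n. Q ^ i))"
      by (simp add: exp_sum sum_distrib_left)
    also have "(\<Sum>i\<le>n. Q ^ i) \<le> 1 / (1 - Q)"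
    proof -
      have "(\<Sum>i\<le>n. Q ^ i) = (\<Sum>i<Suc n. Q ^ i)" by (simp add: lessThan_Suc_atMost)
      also have "\<dots> = (1 - Q ^ Suc n) / (1 - Q)" using Q by (simp add: geometric_sum field_simps)
      also have "\<dots> \<le> 1 / (1 - Q)" using Q by (intro divide_right_mono) auto
      finally show ?thesis .
    qed
    then have "exp (norm a * (\<Sum>i\<le>n. Q ^ i)) \<le> exp (norm a / (1 - Q))"
      by (simp add: mult_left_mono divide_inverse)
    finally show ?thesis by simp
  qed
  have "norm (prodinf f - 1) \<le> exp (norm a / (1 - Q)) - 1"
    by (rule Lim_bounded[OF L]) (use B in auto)
  then show ?thesis unfolding qpoch_inf_def f_def by simp
qed

lemma Ef_0: assumes "0 < q" "q < 1" shows "Ef q 0 = 1"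
proof -
  have "norm (qpoch_inf (q^2) 0 - 1) \<le> 0"
    using qp_bound[of "q^2" 0] assms by (simp add: power_less_one_iff)
  then show ?thesis unfolding Ef_def qexp_def by simp
qed

lemma Ef_cont: assumes q: "0 < q" "q < 1" shows "isCont (Ef q) 0"
proof -
  define Q where "Q = q^2"
  have Q: "0 \<le> Q" "Q < 1" using q unfolding Q_def by (auto simp: power_less_one_iff)
  have g: "((\<lambda>y::complex. exp (norm (y^2) / (1 - Q)) - 1) \<longlongrightarrow> 0) (at 0)"
  proof -
    have "isCont (\<lambda>y::complex. exp (norm (y^2) / (1 - Q)) - 1) 0" using Q by (intro continuous_intros) auto
    then show ?thesis by (simp add: isCont_def)
  qed
  have "((\<lambda>y. qpoch_inf Q (-(y^2)) - 1) \<longlongrightarrow> 0) (at 0)"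
    by (rule Lim_null_comparison[OF _ g], intro always_eventually allI) (metis qp_bound[OF Q] norm_minus_cancel)
  then have "((\<lambda>y. qpoch_inf Q (-(y^2)) - 1 + 1) \<longlongrightarrow> 0 + 1) (at 0)"
    by (intro tendsto_add tendsto_const)
  then have "((\<lambda>y. 1 / qpoch_inf Q (-(y^2))) \<longlongrightarrow> 1 / 1) (at 0)"
    by (intro tendsto_divide tendsto_const) auto
  then show ?thesis unfolding isCont_def Ef_0[OF q] unfolding Ef_def qexp_def Q_def by simp
qed



lemma strip_nz:
  fixes x :: complex assumes "\<bar>Im x\<bar> < 1" shows "1 + x^2 \<noteq> 0"
proof
  assume h: "1 + x^2 = 0"
  have "(x - \<i>) * (x + \<i>) = 1 + x^2" by (simp add: algebra_simps power2_eq_square)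
  then have "x = \<i> \<or> x = -\<i>" using h by (simp add: eq_neg_iff_add_eq_0)
  then show False using assms by auto
qed

lemma qD_step:
  fixes q :: real and H :: "complex \<Rightarrow> complex" and c :: "nat \<Rightarrow> complex"
  assumes q: "0 < q" "q < 1"
    and HH: "\<And>x. \<bar>Im x\<bar> < 1 \<Longrightarrow> H x = PS c x * Ef q x"
    and sm: "\<And>y. summable (\<lambda>m. norm (c m * y ^ m))"
    and sm2: "\<And>y. summable (\<lambda>m. norm (stp q c m * y ^ m))"
    and x: "\<bar>Im x\<bar> < 1"
  shows "qD q H x = PS (stp q c) x * Ef q x"
proof -
  have key: "(H y - H (of_real q * y)) / (of_real (1 - q) * y) = PS (stp q c) y * Ef q y"
    if y: "y \<noteq> 0" "\<bar>Im y\<bar> < 1" for y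
  proof -
    have "\<bar>Im (of_real q * y)\<bar> = q * \<bar>Im y\<bar>" using q by (simp add: abs_mult)
    also have "\<dots> < 1" using q y by (smt (verit) mult_left_le_one_le abs_ge_zero)
    finally have qy: "\<bar>Im (of_real q * y)\<bar> < 1" .
    have nz: "1 + y^2 \<noteq> 0" by (rule strip_nz[OF y(2)])
    have "(H y - H (of_real q * y)) / (of_real (1 - q) * y)
        = (PS c y * Ef q y - PS c (of_real q * y) * ((1 + y^2) * Ef q y)) / (of_real (1 - q) * y)"
      using HH[OF y(2)] HH[OF qy] Ef_shift[OF q nz] by simp
    also have "\<dots> = Ef q y * ((PS c y - (1 + y^2) * PS c (of_real q * y)) / (of_real (1 - q) * y))"
      by (simp add: algebra_simps)
    also have "\<dots> = Ef q y * PS (stp q c) y" using stp_ps[OF q y(1) sm] by simp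
    finally show ?thesis by simp
  qed
  show ?thesis
  proof (cases "x = 0")
    case False
    then show ?thesis using key[OF False x] by (simp add: qD_def)
  next
    case True
    have pe: "PS (stp q c) = (\<lambda>x. \<Sum>m. stp q c m * x ^ m)" by (rule ext) (simp add: PS_def)
    have ic1: "isCont (PS (stp q c)) 0" unfolding pe
      using isCont_powser_converges_everywhere[of "stp q c" 0] summable_norm_cancel[OF sm2] by blast
    have ic: "isCont (\<lambda>y. PS (stp q c) y * Ef q y) 0"
      by (rule isCont_mult[OF ic1 Ef_cont[OF q]])
    then have t: "((\<lambda>y. PS (stp q c) y * Ef q y) \<longlongrightarrow> PS (stp q c) 0 * Ef q 0) (at 0)"
      by (simp add: isCont_def)
    have ev: "eventually (\<lambda>y. PS (stp q c) y * Ef q y = (H y - H (of_real q * y)) / (of_real (1 - q) * y)) (at 0)"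
    proof -
      have "eventually (\<lambda>y::complex. y \<noteq> 0 \<and> dist y 0 < 1) (at 0)"
        unfolding eventually_at by (intro exI[of _ 1]) auto
      then show ?thesis
      proof (rule eventually_mono)
        fix y :: complex assume "y \<noteq> 0 \<and> dist y 0 < 1"
        then have "y \<noteq> 0" "\<bar>Im y\<bar> < 1" using abs_Im_le_cmod[of y] by auto
        then show "PS (stp q c) y * Ef q y = (H y - H (of_real q * y)) / (of_real (1 - q) * y)"
          using key by simp
      qed
    qed
    have "((\<lambda>y. (H y - H (of_real q * y)) / (of_real (1 - q) * y)) \<longlongrightarrow> PS (stp q c) 0 * Ef q 0) (at 0)"
      by (rule Lim_transform_eventually[OF t ev])
    then have "Lim (at 0) (\<lambda>y. (H y - H (of_real q * y)) / (of_real (1 - q) * y)) = PS (stp q c) 0 * Ef q 0"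
      by (intro tendsto_Lim) auto
    then show ?thesis using True by (simp add: qD_def)
  qed
qed

lemma qD_iter:
  fixes q :: real and h :: "complex \<Rightarrow> complex" and a :: "nat \<Rightarrow> complex"
  assumes q: "0 < q" "q < 1"
    and hh: "\<And>x. \<bar>Im x\<bar> < 1 \<Longrightarrow> h x = PS a x * Ef q x"
    and sm: "\<And>e y. summable (\<lambda>m. norm ((stp q ^^ e) a m * y ^ m))"
  shows "\<bar>Im x\<bar> < 1 \<Longrightarrow> (qD q ^^ e) h x = PS ((stp q ^^ e) a) x * Ef q x"
proof (induction e arbitrary: x)
  case 0
  then show ?case using hh by simp
next
  case (Suc e)
  have "qD q ((qD q ^^ e) h) x = PS (stp q ((stp q ^^ e) a)) x * Ef q x"
  proof (rule qD_step[OF q _ _ _ Suc.prems])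
    show "\<And>x. \<bar>Im x\<bar> < 1 \<Longrightarrow> (qD q ^^ e) h x = PS ((stp q ^^ e) a) x * Ef q x" by (rule Suc.IH)
    show "\<And>y. summable (\<lambda>m. norm ((stp q ^^ e) a m * y ^ m))" by (rule sm)
    show "\<And>y. summable (\<lambda>m. norm (stp q ((stp q ^^ e) a) m * y ^ m))"
      using sm[of "Suc e"] by simp
  qed
  then show ?case by simp
qed



lemma norm_suminf_le_bound:
  fixes f :: "nat \<Rightarrow> complex"
  assumes "\<And>n. norm (f n) \<le> g n" "summable g"
  shows "norm (suminf f) \<le> suminf g" "summable (\<lambda>n. norm (f n))"
proof -
  show sn: "summable (\<lambda>n. norm (f n))"
    by (rule summable_comparison_test'[OF assms(2)]) (use assms(1) in simp)
  have "norm (suminf f) \<le> (\<Sum>n. norm (f n))" by (rule summable_norm[OF sn])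
  also have "\<dots> \<le> suminf g" by (rule suminf_le[OF assms(1) sn assms(2)])
  finally show "norm (suminf f) \<le> suminf g" .
qed

lemma infsum_nat_eq:
  fixes f :: "nat \<Rightarrow> complex"
  assumes "summable (\<lambda>n. norm (f n))"
  shows "infsum f UNIV = suminf f"
proof (rule infsumI, rule norm_summable_imp_has_sum[OF assms])
  show "f sums suminf f" by (rule summable_sums, rule summable_norm_cancel[OF assms])
qed

lemma dsum_swap:
  fixes G :: "nat \<Rightarrow> nat \<Rightarrow> complex" and u v :: "nat \<Rightarrow> real"
  assumes b: "\<And>e m. norm (G e m) \<le> u e * v m"
    and u: "summable u" "\<And>e. 0 \<le> u e" and v: "summable v" "\<And>m. 0 \<le> v m"
  shows "(\<Sum>e. \<Sum>m. G e m) = (\<Sum>m. \<Sum>e. G e m)"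
proof -
  have hv: "(v has_sum suminf v) UNIV" by (rule sums_nonneg_imp_has_sum[OF summable_sums[OF v(1)] v(2)])
  have sv: "0 \<le> suminf v" by (rule suminf_nonneg[OF v(1) v(2)])
  have gs: "(\<lambda>(e, m). u e * v m) summable_on (UNIV \<times> UNIV)"
  proof (rule summable_on_SigmaI[where f="\<lambda>(e, m). u e * v m" and g="\<lambda>e. u e * suminf v"])
    fix e :: nat
    show "((\<lambda>m. case (e, m) of (e, m) \<Rightarrow> u e * v m) has_sum u e * suminf v) UNIV"
      using has_sum_cmult_right[OF hv, of "u e"] by simp
  next
    have "summable (\<lambda>e. norm (u e * suminf v))" using u sv by (simp add: abs_of_nonneg summable_mult2)
    then show "(\<lambda>e. u e * suminf v) summable_on UNIV" by (rule norm_summable_imp_summable_on)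
  next
    fix e m :: nat show "0 \<le> (case (e, m) of (e, m) \<Rightarrow> u e * v m)" using u v by simp
  qed
  have ag: "(\<lambda>x. norm ((\<lambda>(e, m). G e m) x)) summable_on (UNIV \<times> UNIV)"
    by (rule Infinite_Sum.abs_summable_on_comparison_test'[OF gs]) (auto simp: b split: prod.split)
  have Gs: "(\<lambda>(e, m). G e m) summable_on (UNIV \<times> UNIV)"
    by (rule abs_summable_summable) (use ag in simp)
  have sw: "(\<Sum>\<^sub>\<infinity>e\<in>UNIV. infsum (G e) UNIV) = (\<Sum>\<^sub>\<infinity>m\<in>UNIV. \<Sum>\<^sub>\<infinity>e\<in>UNIV. G e m)"
    by (rule infsum_swap_banach[OF Gs])
  have in1: "summable (\<lambda>m. norm (G e m))" "norm (\<Sum>m. G e m) \<le> u e * suminf v" for e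
  proof -
    have "norm (G e m) \<le> u e * v m" for m by (rule b)
    moreover have "summable (\<lambda>m. u e * v m)" by (rule summable_mult[OF v(1)])
    ultimately show "summable (\<lambda>m. norm (G e m))" "norm (\<Sum>m. G e m) \<le> u e * suminf v"
      using norm_suminf_le_bound[of "G e" "\<lambda>m. u e * v m"] by (auto simp: suminf_mult)
  qed
  have in2: "summable (\<lambda>e. norm (G e m))" "norm (\<Sum>e. G e m) \<le> v m * suminf u" for m
  proof -
    have "norm (G e m) \<le> v m * u e" for e using b[of e m] by (simp add: mult.commute)
    moreover have "summable (\<lambda>e. v m * u e)" by (rule summable_mult[OF u(1)])
    ultimately show "summable (\<lambda>e. norm (G e m))" "norm (\<Sum>e. G e m) \<le> v m * suminf u"
      using norm_suminf_le_bound[of "\<lambda>e. G e m" "\<lambda>e. v m * u e"] by (auto simp: suminf_mult)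
  qed
  have o1: "summable (\<lambda>e. norm (\<Sum>m. G e m))"
    using norm_suminf_le_bound(2)[of "\<lambda>e. \<Sum>m. G e m" "\<lambda>e. u e * suminf v"] in1(2) summable_mult2[OF u(1)] by blast
  have o2: "summable (\<lambda>m. norm (\<Sum>e. G e m))"
    using norm_suminf_le_bound(2)[of "\<lambda>m. \<Sum>e. G e m" "\<lambda>m. v m * suminf u"] in2(2) summable_mult2[OF v(1)] by blast
  have "(\<Sum>e. \<Sum>m. G e m) = (\<Sum>\<^sub>\<infinity>e\<in>UNIV. infsum (G e) UNIV)"
    using infsum_nat_eq[OF o1] infsum_nat_eq[OF in1(1)] by simp
  also have "\<dots> = (\<Sum>\<^sub>\<infinity>m\<in>UNIV. \<Sum>\<^sub>\<infinity>e\<in>UNIV. G e m)" by (rule sw)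
  also have "\<dots> = (\<Sum>m. \<Sum>e. G e m)"
    using infsum_nat_eq[OF o2] infsum_nat_eq[OF in2(1)] by simp
  finally show ?thesis .
qed



lemma powr_sqrt_pow:
  fixes q :: real assumes "0 < q"
  shows "q powr (real l ^ 2 / 2) = sqrt q ^ (l^2)"
proof -
  have "sqrt q ^ (l^2) = (q powr (1/2)) ^ (l^2)" using assms by (simp add: powr_half_sqrt)
  also have "\<dots> = (q powr (1/2)) powr (real (l^2))" using assms by (intro powr_realpow[symmetric]) auto
  also have "\<dots> = q powr (1/2 * real (l^2))" by (rule powr_powr)
  also have "\<dots> = q powr (real l ^ 2 / 2)" by simp
  finally show ?thesis by simp
qed

theorem lemma6p6:
  fixes q \<gamma> s :: real and h :: "complex \<Rightarrow> complex" and g :: "real \<Rightarrow> complex"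
  assumes "0 < q" "q < 1"
    and "\<gamma> > 0"
    and "0 < s" "s < 1 / sqrt q"
    and "h \<in> Ms q s"
    and "g \<in> Iinf q \<gamma>"
    and "\<forall>t::complex. norm t \<le> 1 / ((1 - q) * sqrt q * s) \<longrightarrow>
           summable (\<lambda>k. norm (qmoment q \<gamma> g k * t ^ k / of_real (qfact q k)))"
  shows "(\<forall>x. \<bar>Im x\<bar> < 1 \<longrightarrow> summable (\<lambda>e. norm (qconv_term q \<gamma> g h x e)))
         \<and> qconv q \<gamma> g h \<in> Ms q s"
proof -
  note q = assms(1,2)
  note s = assms(4)
  obtain a C where C: "C > 0" and ab: "\<And>l. norm (a l) \<le> C * s ^ l * q powr (real l ^ 2 / 2)"
    and hf: "\<And>x. \<bar>Im x\<bar> < 1 \<Longrightarrow> h x = (\<Sum>l. a l * x ^ l) * qexp (q\<^sup>2) (- (x\<^sup>2))"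
    using assms(6) unfolding Ms_def by blast
  define p where "p = sqrt q"
  have p: "0 < p" "p < 1" using q unfolding p_def by auto
  have qp: "q = p^2" using q unfolding p_def by simp
  have sp: "s * p \<le> 1" using assms(5) q p unfolding p_def by (simp add: field_simps)
  have ab': "\<And>l. norm (a l) \<le> C * s ^ l * p ^ (l^2)"
    using ab powr_sqrt_pow[OF q(1)] unfolding p_def by simp
  define R where "R = 1 / ((1 - p^2) * p * s)"
  have "p^2 < 1" using p by (simp add: power_less_one_iff)
  then have R0: "0 < R" unfolding R_def using p s by simp
  have Rq: "R = 1 / ((1 - q) * sqrt q * s)" unfolding R_def p_def using q by simp
  define Wb where "Wb = exp (1 / (1 - q)^2)"
  have Wb0: "0 < Wb" unfolding Wb_def by simp
  define c where "c e = (stp q ^^ e) a" for e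
  have cb: "norm (c e m) \<le> (C * R^e * Wb) * s^m * p^(m^2)" for e m
  proof -
    have "norm (c e m) \<le> C * R^e * s^m * p^(m^2) * wt (p^2) m"
      unfolding c_def qp by (rule cf_bound[OF p s sp _ ab' R_def]) (use C in simp)
    also have "\<dots> \<le> C * R^e * s^m * p^(m^2) * Wb"
      using wt_le[OF q, of m] C R0 s p unfolding Wb_def qp by (intro mult_left_mono) auto
    finally show ?thesis by (simp add: mult_ac)
  qed
  have sm: "\<And>e y. summable (\<lambda>m. norm ((stp q ^^ e) a m * y ^ m))"
    using ps_summable[OF cb] s p unfolding c_def by auto
  have hh: "\<And>x. \<bar>Im x\<bar> < 1 \<Longrightarrow> h x = PS a x * Ef q x"
    using hf unfolding PS_def Ef_def by simp
  have it: "\<And>e x. \<bar>Im x\<bar> < 1 \<Longrightarrow> (qD q ^^ e) h x = PS (c e) x * Ef q x"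
    unfolding c_def by (rule qD_iter[OF q hh sm])
  define t where "t = complex_of_real R"
  define M where "M e = norm (qmoment q \<gamma> g e * t ^ e / of_real (qfact q e))" for e
  have "norm t \<le> 1 / ((1 - q) * sqrt q * s)" unfolding t_def norm_of_real using R0 Rq by (simp only: abs_of_pos)
  then have Ms: "summable M" unfolding M_def using assms(8) by blast
  have M0: "0 \<le> M e" for e unfolding M_def by simp
  define \<nu> where "\<nu> e = (-1) ^ e * qmoment q \<gamma> g e / of_real (qfact q e)" for e
  have nuM: "norm (\<nu> e) * R^e = M e" for e
    unfolding \<nu>_def M_def t_def using R0 by (simp add: norm_mult norm_divide norm_power)
  define v where "v x m = C * Wb * ((s * norm x) ^ m * p^(m^2))" for x :: complex and m
  have v0: "0 \<le> v x m" for x m unfolding v_def using C Wb0 s p by simp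
  have vs: "summable (v x)" for x unfolding v_def
    by (intro summable_mult summable_gauss) (use s p in auto)
  have Gb: "norm (\<nu> e * c e m * x ^ m) \<le> M e * v x m" for e m x
  proof -
    have "norm (\<nu> e * c e m * x ^ m) = norm (\<nu> e) * norm (c e m) * norm x ^ m"
      by (simp add: norm_mult norm_power)
    also have "\<dots> \<le> norm (\<nu> e) * ((C * R^e * Wb) * s^m * p^(m^2)) * norm x ^ m"
      by (intro mult_right_mono mult_left_mono cb) auto
    also have "\<dots> = (norm (\<nu> e) * R^e) * v x m" unfolding v_def by (simp add: power_mult_distrib mult_ac)
    finally show ?thesis unfolding nuM .
  qed
  have PSb: "norm (\<nu> e * PS (c e) x) \<le> M e * suminf (v x)" for e x
  proof -
    have "\<nu> e * PS (c e) x = (\<Sum>m. \<nu> e * c e m * x ^ m)"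
      unfolding PS_def using summable_norm_cancel[OF sm[of e x]] unfolding c_def
      by (simp add: suminf_mult mult.assoc)
    also have "norm \<dots> \<le> (\<Sum>m. M e * v x m)"
      by (rule norm_suminf_le_bound(1)[OF Gb summable_mult[OF vs]])
    also have "\<dots> = M e * suminf (v x)" by (rule suminf_mult[OF vs])
    finally show ?thesis .
  qed
  have term_eq: "qconv_term q \<gamma> g h x e = \<nu> e * PS (c e) x * Ef q x" if x: "\<bar>Im x\<bar> < 1" for x e
    unfolding qconv_term_def \<nu>_def it[OF x] by (simp add: mult_ac)
  have termb: "norm (qconv_term q \<gamma> g h x e) \<le> M e * (suminf (v x) * norm (Ef q x))"
    if x: "\<bar>Im x\<bar> < 1" for x e
  proof -
    have "norm (qconv_term q \<gamma> g h x e) = norm (\<nu> e * PS (c e) x) * norm (Ef q x)"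
      unfolding term_eq[OF x] by (simp add: norm_mult)
    also have "\<dots> \<le> M e * suminf (v x) * norm (Ef q x)" by (intro mult_right_mono PSb) auto
    finally show ?thesis by (simp add: mult_ac)
  qed
  have part1: "\<forall>x. \<bar>Im x\<bar> < 1 \<longrightarrow> summable (\<lambda>e. norm (qconv_term q \<gamma> g h x e))"
  proof (intro allI impI)
    fix x :: complex assume x: "\<bar>Im x\<bar> < 1"
    show "summable (\<lambda>e. norm (qconv_term q \<gamma> g h x e))"
      by (rule summable_comparison_test'[OF summable_mult2[OF Ms]]) (use termb[OF x] in simp)
  qed
  define a' where "a' m = (\<Sum>e. \<nu> e * c e m)" for m
  define C' where "C' = C * Wb * suminf M + 1"
  have "0 \<le> C * Wb * suminf M" using C Wb0 suminf_nonneg[OF Ms M0] by simp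
  then have C'0: "C' > 0" unfolding C'_def by simp
  have a'b: "norm (a' l) \<le> C' * s ^ l * q powr (real l ^ 2 / 2)" for l
  proof -
    have "norm (\<nu> e * c e l) \<le> M e * (C * Wb * s^l * p^(l^2))" for e
      using Gb[of e l 1] unfolding v_def by (simp add: mult_ac)
    then have "norm (a' l) \<le> (\<Sum>e. M e * (C * Wb * s^l * p^(l^2)))"
      unfolding a'_def by (rule norm_suminf_le_bound(1)) (rule summable_mult2[OF Ms])
    also have "\<dots> = suminf M * (C * Wb * s^l * p^(l^2))" by (rule suminf_mult2[OF Ms, symmetric])
    also have "\<dots> \<le> C' * s^l * p^(l^2)"
    proof -
      have "0 \<le> s^l * p^(l^2)" using s p by simp
      then have "(C * Wb * suminf M) * (s^l * p^(l^2)) \<le> C' * (s^l * p^(l^2))"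
        unfolding C'_def by (intro mult_right_mono) auto
      then show ?thesis by (simp add: mult_ac)
    qed
    finally show ?thesis using powr_sqrt_pow[OF q(1)] unfolding p_def by simp
  qed
  have a'f: "qconv q \<gamma> g h x = (\<Sum>l. a' l * x ^ l) * qexp (q\<^sup>2) (- (x\<^sup>2))"
    if x: "\<bar>Im x\<bar> < 1" for x
  proof -
    have s1: "summable (\<lambda>e. \<nu> e * PS (c e) x)"
      by (rule summable_norm_cancel, rule summable_comparison_test'[OF summable_mult2[OF Ms]])
         (use PSb in simp)
    have "qconv q \<gamma> g h x = (\<Sum>e. \<nu> e * PS (c e) x * Ef q x)"
      unfolding qconv_def by (rule suminf_cong) (rule term_eq[OF x])
    also have "\<dots> = (\<Sum>e. \<nu> e * PS (c e) x) * Ef q x" by (rule suminf_mult2[OF s1, symmetric])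
    also have "(\<Sum>e. \<nu> e * PS (c e) x) = (\<Sum>e. \<Sum>m. \<nu> e * c e m * x ^ m)"
    proof (rule suminf_cong)
      fix e
      show "\<nu> e * PS (c e) x = (\<Sum>m. \<nu> e * c e m * x ^ m)"
        unfolding PS_def using summable_norm_cancel[OF sm[of e x]] unfolding c_def
        by (simp add: suminf_mult mult.assoc)
    qed
    also have "\<dots> = (\<Sum>m. \<Sum>e. \<nu> e * c e m * x ^ m)"
      by (rule dsum_swap[OF Gb Ms M0 vs v0])
    also have "\<dots> = (\<Sum>m. a' m * x ^ m)"
    proof (rule suminf_cong)
      fix m
      have "summable (\<lambda>e. \<nu> e * c e m)"
      proof (rule summable_norm_cancel, rule summable_comparison_test'[OF summable_mult2[OF Ms]])
        fix e show "norm (norm (\<nu> e * c e m)) \<le> M e * (C * Wb * s^m * p^(m^2))"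
          using Gb[of e m 1] unfolding v_def by (simp add: mult_ac)
      qed
      then show "(\<Sum>e. \<nu> e * c e m * x ^ m) = a' m * x ^ m"
        unfolding a'_def by (rule suminf_mult2[symmetric])
    qed
    finally show ?thesis unfolding Ef_def by simp
  qed
  have "qconv q \<gamma> g h \<in> Ms q s"
    unfolding Ms_def mem_Collect_eq
    by (intro exI[of _ a'] exI[of _ C'] conjI allI impI C'0 a'b a'f) auto
  with part1 show ?thesis by blast
qed


end
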